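(* Let $0\le N_n\le n$ be integers with $N_n/n\to1$ and $D_n=n-N_n\to\infty$. Let $R_n=n/D_n$ and define, for $0\le k\le D_n$, $$\tilde f_{k,n}=\frac{(k+N_n)!\,D_n!}{k!\,n!}\,R_n^{\,D_n-k}.$$ Let $\log\tilde f(t)=t-1-t\log t$ for $0\le t\le1$. Then $$\lim_{n\to\infty}\sup_{0\le k\le D_n}\Big|\frac{1}{D_n}\log\tilde f_{k,n}-\log\tilde f\big(\tfrac{k}{D_n}\big)\Big|=0.$$
   Context: $0\log0=0$. *)

theory Defs
  imports "HOL-Analysis.Analysis"
begin

text \<open>Convention: 0 log 0 = 0. In Isabelle ln 0 = 0, so t * ln t = 0 at t = 0 automatically.\<close>
definition logftilde :: "real \<Rightarrow> real" where
  "logftilde t = t - 1 - t * ln t"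

definition ftilde :: "nat \<Rightarrow> nat \<Rightarrow> nat \<Rightarrow> real" where
  "ftilde N n k = (let D = n - N; R = real n / real D in
      fact (k + N) * fact D / (fact k * fact n) * R ^ (D - k))"

end

theory Submission
  imports Defs "HOL-Real_Asymp.Real_Asymp"
begin

definition gS :: "nat \<Rightarrow> real" where
  "gS m = ln (fact m) - (real m * ln (real m) - real m)"

lemma gS_step: "gS (Suc m) = gS m + 1 - real m * (ln (real m + 1) - ln (real m))"
proof -
  have "ln (fact (Suc m) :: real) = ln (real m + 1) + ln (fact m)"
    by (simp add: ln_mult add.commute)
  then show ?thesis unfolding gS_def by (simp add: algebra_simps)
qed

lemma ln_diff_up: "m \<ge> 1 \<Longrightarrow> real m * (ln (real m + 1) - ln (real m)) \<le> 1"
proof -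
  assume m: "m \<ge> 1"
  have "ln ((real m + 1) / real m) \<le> (real m + 1) / real m - 1"
    using m by (intro ln_le_minus_one) auto
  also have "\<dots> = 1 / real m" using m by (simp add: field_simps)
  finally have "ln (real m + 1) - ln (real m) \<le> 1 / real m"
    using m by (simp add: ln_divide_pos)
  then show ?thesis using m by (simp add: field_simps)
qed

lemma ln_diff_low: "m \<ge> 1 \<Longrightarrow> 1 \<le> (real m + 1) * (ln (real m + 1) - ln (real m))"
proof -
  assume m: "m \<ge> 1"
  have "ln (real m / (real m + 1)) \<le> real m / (real m + 1) - 1"
    using m by (intro ln_le_minus_one) auto
  also have "\<dots> = - 1 / (real m + 1)" by (simp add: field_simps)
  finally have "ln (real m) - ln (real m + 1) \<le> - 1 / (real m + 1)"
    using m by (simp add: ln_divide_pos)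
  then show ?thesis by (simp add: field_simps)
qed

lemma gS_pos: "1 \<le> gS (Suc m) \<and> gS (Suc m) \<le> 1 + ln (real (Suc m))"
proof (induction m)
  case 0
  then show ?case by (simp add: gS_def)
next
  case (Suc m)
  have s: "gS (Suc (Suc m)) = gS (Suc m) + 1 - real (Suc m) * (ln (real (Suc m) + 1) - ln (real (Suc m)))"
    by (rule gS_step)
  have a: "real (Suc m) * (ln (real (Suc m) + 1) - ln (real (Suc m))) \<le> 1"
    by (rule ln_diff_up) simp
  have b: "1 \<le> (real (Suc m) + 1) * (ln (real (Suc m) + 1) - ln (real (Suc m)))"
    by (rule ln_diff_low) simp
  have c: "real (Suc (Suc m)) = real (Suc m) + 1" by simp
  show ?case using Suc s a b c by (simp add: algebra_simps)
qed

lemma gS_bound: "0 \<le> gS m \<and> gS m \<le> 1 + ln (real m + 1)"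
proof (cases m)
  case 0
  then show ?thesis by (simp add: gS_def)
next
  case (Suc k)
  have "ln (real m) \<le> ln (real m + 1)" using Suc by simp
  moreover have "gS m \<le> 1 + ln (real m)" using gS_pos[of k] Suc by simp
  moreover have "1 \<le> gS m" using gS_pos[of k] Suc by simp
  ultimately show ?thesis by linarith
qed

lemma fact_ratio:
  "fact a * (real a + 1) ^ d \<le> (fact (a + d) :: real) \<and> (fact (a + d) :: real) \<le> fact a * (real (a + d)) ^ d"
proof (induction d)
  case 0
  then show ?case by simp
next
  case (Suc d)
  have f: "(fact (a + Suc d) :: real) = (real (a + d) + 1) * fact (a + d)"
    by simp
  have l: "fact a * (real a + 1) ^ Suc d = (real a + 1) * (fact a * (real a + 1) ^ d)"
    by simp
  have "(real a + 1) * (fact a * (real a + 1) ^ d) \<le> (real (a + d) + 1) * fact (a + d)"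
    using Suc.IH by (intro mult_mono) auto
  moreover have "(real (a + d) + 1) * fact (a + d) \<le> (real (a + d) + 1) * (fact a * (real (a + d)) ^ d)"
    using Suc.IH by (intro mult_left_mono) auto
  moreover have "fact a * (real (a + d)) ^ d \<le> fact a * (real (a + Suc d)) ^ d"
    by (intro mult_left_mono power_mono) auto
  moreover have "fact a * (real (a + Suc d)) ^ Suc d = real (a + Suc d) * (fact a * (real (a + Suc d)) ^ d)"
    by simp
  moreover have "real (a + Suc d) = real (a + d) + 1" by simp
  ultimately show ?case using f l
    by (smt (verit, ccfv_SIG) mult_left_mono of_nat_0_le_iff)
qed

lemma abs_aux:
  fixes a L b M P X :: real
  assumes "M \<le> L" "0 \<le> a \<and> a \<le> 1 + L" "0 \<le> b \<and> b \<le> 1 + M" "0 \<le> P" "P \<le> X"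
  shows "\<bar>P + a - b\<bar> \<le> 2 * (1 + L) + X"
  using assms by (simp add: abs_le_iff) 

lemma main_est:
  fixes N n k :: nat
  assumes Nn: "N \<le> n" and D1: "n - N \<ge> 1" and kD: "k \<le> n - N"
  shows "\<bar>ln (ftilde N n k) / real (n - N) - logftilde (real k / real (n - N))\<bar>
         \<le> 2 * (1 + ln (real (n - N) + 1)) / real (n - N) + (ln (real n) - ln (real N + 1))"
proof -
  define D where "D = n - N"
  define d where "d = D - k"
  have Dpos: "real D > 0" using D1 D_def by simp
  have npos: "real n > 0" using D1 by simp
  have nad: "k + N + d = n" using Nn kD D_def d_def by simp
  have ft: "ftilde N n k = fact (k + N) * fact D / (fact k * fact n) * (real n / real D) ^ d"
    unfolding ftilde_def D_def d_def Let_def by simp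
  have lnf: "ln (ftilde N n k) = ln (fact (k + N)) + ln (fact D) - ln (fact k) - ln (fact n)
       + real d * (ln (real n) - ln (real D))"
    unfolding ft using Dpos npos
    by (simp add: ln_mult ln_div ln_realpow ln_divide_pos)
  define P where "P = ln (fact (k + N)) - ln (fact n) + real d * ln (real n)"
  have fr: "fact (k + N) * (real (k + N) + 1) ^ d \<le> (fact n :: real) \<and>
            (fact n :: real) \<le> fact (k + N) * (real n) ^ d"
    using fact_ratio[of "k + N" d] nad by simp
  have "ln (fact n :: real) \<le> ln (fact (k + N) * (real n) ^ d)"
    using fr npos by (subst ln_le_cancel_iff) auto
  hence P0: "P \<ge> 0" unfolding P_def using npos by (simp add: ln_mult ln_realpow)
  have "ln (fact (k + N) * (real (k + N) + 1) ^ d) \<le> ln (fact n :: real)"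
    using fr by (subst ln_le_cancel_iff) auto
  hence "ln (fact (k + N)) + real d * ln (real (k + N) + 1) \<le> ln (fact n :: real)"
    by (simp add: ln_mult ln_realpow)
  moreover have "ln (real N + 1) \<le> ln (real (k + N) + 1)" by simp
  ultimately have P1: "P \<le> real d * (ln (real n) - ln (real N + 1))"
    unfolding P_def by (smt (verit) mult_left_mono of_nat_0_le_iff right_diff_distrib)
  have Nlt: "N + 1 \<le> n" using D1 by simp
  have lnN: "ln (real N + 1) \<le> ln (real n)" using Nlt by simp
  have dD: "real d \<le> real D" using d_def by simp
  have P2: "P \<le> real D * (ln (real n) - ln (real N + 1))"
    using P1 dD lnN by (smt (verit) mult_right_mono)
  have lt: "real D * logftilde (real k / real D) = real k - real D - real k * (ln (real k) - ln (real D))"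
  proof (cases "k = 0")
    case True then show ?thesis unfolding logftilde_def by simp
  next
    case False
    then have e: "ln (real k / real D) = ln (real k) - ln (real D)" using Dpos by (simp add: ln_divide_pos)
    have "real D * logftilde (real k / real D) = real D * (real k / real D) - real D
          - (real D * (real k / real D)) * ln (real k / real D)"
      unfolding logftilde_def by (simp add: algebra_simps)
    also have "real D * (real k / real D) = real k" using Dpos by simp
    finally show ?thesis unfolding e .
  qed
  have dk: "real d = real D - real k" using d_def kD D_def by simp
  have key: "ln (ftilde N n k) - real D * logftilde (real k / real D) = P + gS D - gS k"
    unfolding lnf lt P_def gS_def dk by (simp add: algebra_simps)
  have gD: "0 \<le> gS D \<and> gS D \<le> 1 + ln (real D + 1)" by (rule gS_bound)
  have gk: "0 \<le> gS k \<and> gS k \<le> 1 + ln (real k + 1)" by (rule gS_bound)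
  have "ln (real k + 1) \<le> ln (real D + 1)" using kD D_def by simp
  hence bnd: "\<bar>P + gS D - gS k\<bar> \<le> 2 * (1 + ln (real D + 1)) + real D * (ln (real n) - ln (real N + 1))"
    using abs_aux[where a="gS D" and L="ln (real D + 1)" and b="gS k" and M="ln (real k + 1)" and P=P and X="real D * (ln (real n) - ln (real N + 1))"] gD gk P0 P2
    by blast
  have "ln (ftilde N n k) / real D - logftilde (real k / real D)
        = (P + gS D - gS k) / real D" using key Dpos by (simp add: field_simps)
  hence "\<bar>ln (ftilde N n k) / real D - logftilde (real k / real D)\<bar> = \<bar>P + gS D - gS k\<bar> / real D"
    using Dpos by simp
  also have "\<dots> \<le> (2 * (1 + ln (real D + 1)) + real D * (ln (real n) - ln (real N + 1))) / real D"
    using bnd Dpos by (simp add: divide_right_mono)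
  also have "\<dots> = 2 * (1 + ln (real D + 1)) / real D + (ln (real n) - ln (real N + 1))"
    using Dpos by (simp add: field_simps)
  finally show ?thesis unfolding D_def .
qed

theorem mainTheorem10:
  fixes N :: "nat \<Rightarrow> nat"
  assumes "\<And>n. N n \<le> n"
    and "(\<lambda>n. real (N n) / real n) \<longlonglongrightarrow> 1"
    and "filterlim (\<lambda>n. n - N n) at_top sequentially"
  shows "(\<lambda>n. Max ((\<lambda>k. \<bar>ln (ftilde (N n) n k) / real (n - N n)
                          - logftilde (real k / real (n - N n))\<bar>) ` {0..n - N n}))
           \<longlonglongrightarrow> 0"
proof -
  define e where "e n = 2 * (1 + ln (real (n - N n) + 1)) / real (n - N n) + (ln (real n) - ln (real (N n) + 1))" for n
  define M where "M n = Max ((\<lambda>k. \<bar>ln (ftilde (N n) n k) / real (n - N n)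
                          - logftilde (real k / real (n - N n))\<bar>) ` {0..n - N n})" for n
  have ev1: "eventually (\<lambda>n. n - N n \<ge> 1) sequentially"
    using assms(3) by (simp add: filterlim_at_top)
  have lo: "eventually (\<lambda>n. 0 \<le> M n) sequentially"
  proof (rule always_eventually, intro allI)
    fix n
    show "0 \<le> M n" unfolding M_def
      by (rule order.trans[OF abs_ge_zero Max_ge]) (auto intro!: imageI)
  qed
  have hi: "eventually (\<lambda>n. M n \<le> e n) sequentially"
    using ev1
  proof eventually_elim
    case (elim n)
    show ?case unfolding M_def e_def
      using main_est[OF assms(1) elim] by (subst Max_le_iff) auto
  qed
  have h: "((\<lambda>x::real. 2 * (1 + ln (x + 1)) / x) \<longlongrightarrow> 0) at_top" by real_asymp
  have rD: "filterlim (\<lambda>n. real (n - N n)) at_top sequentially"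
    by (rule filterlim_compose[OF filterlim_real_sequentially assms(3)])
  have t1: "(\<lambda>n. 2 * (1 + ln (real (n - N n) + 1)) / real (n - N n)) \<longlonglongrightarrow> 0"
    using filterlim_compose[OF h rD] by (simp add: o_def)
  have q: "(\<lambda>n. real (N n) / real n + 1 / real n) \<longlonglongrightarrow> 1 + 0"
    by (intro tendsto_add assms(2) lim_const_over_n)
  have q2: "(\<lambda>n. ln (real (N n) / real n + 1 / real n)) \<longlonglongrightarrow> ln 1"
    using q by (intro tendsto_ln) auto
  have t2: "(\<lambda>n. ln (real n) - ln (real (N n) + 1)) \<longlonglongrightarrow> 0"
  proof -
    have "(\<lambda>n. - ln (real (N n) / real n + 1 / real n)) \<longlonglongrightarrow> - 0"
      using q2 by (intro tendsto_minus) simp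
    moreover have "eventually (\<lambda>n. - ln (real (N n) / real n + 1 / real n) = ln (real n) - ln (real (N n) + 1)) sequentially"
      using eventually_gt_at_top[of 0]
    proof eventually_elim
      case (elim n)
      have "real (N n) / real n + 1 / real n = (real (N n) + 1) / real n" by (simp add: add_divide_distrib)
      then show ?case using elim by (simp add: ln_divide_pos)
    qed
    ultimately show ?thesis by (simp add: tendsto_cong)
  qed
  have "e \<longlonglongrightarrow> 0 + 0" unfolding e_def by (intro tendsto_add t1 t2)
  hence e0: "e \<longlonglongrightarrow> 0" by simp
  have "M \<longlonglongrightarrow> 0"
    by (rule tendsto_sandwich[OF lo hi tendsto_const e0])
  then show ?thesis unfolding M_def .
qed

end
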